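(* Let $G=(V,E)$ be a directed graph with an extraction order $G^{\mathcal X}=(V,E^{\mathcal X},s)$. Suppose a node $v\in V$ separates a set of nodes $U\subset V$ from the root $s$, i.e., every path in the underlying undirected graph of $G$ from $s$ to a node of $U$ passes through $v$. Then every edge incident to $v$ and to some node $u\in U$ is oriented away from $v$ in the extraction order, i.e., it appears as $(v,u)\in E^{\mathcal X}$.
   Context: An extraction order of a directed graph $G=(V,E)$ is a rooted directed graph $G^{\mathcal X}=(V,E^{\mathcal X},s)$ with root $s\in V$ such that $G^{\mathcal X}$ is acyclic, every node is reachable from $s$, and $E^{\mathcal X}$ is obtained from $E$ by reversing the orientation of some (possibly no) edges. *)

theory Defs
  imports Main
begin

definition extraction_order ::
  "'a set \<Rightarrow> ('a \<times> 'a) set \<Rightarrow> ('a \<times> 'a) set \<Rightarrow> 'a \<Rightarrow> bool" where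
  "extraction_order V E EX_ord s \<longleftrightarrow>
     s \<in> V \<and>
     (\<exists>R \<subseteq> E. EX_ord = (E - R) \<union> R\<inverse>) \<and>
     acyclic EX_ord \<and>
     (\<forall>x\<in>V. (s, x) \<in> EX_ord\<^sup>*)"

definition undirected_path :: "'a set \<Rightarrow> ('a \<times> 'a) set \<Rightarrow> 'a list \<Rightarrow> 'a \<Rightarrow> 'a \<Rightarrow> bool" where
  "undirected_path V E xs a b \<longleftrightarrow>
     xs \<noteq> [] \<and> hd xs = a \<and> last xs = b \<and> set xs \<subseteq> V \<and>
     (\<forall>i. Suc i < length xs \<longrightarrow> (xs ! i, xs ! Suc i) \<in> E \<union> E\<inverse>)"

definition separates :: "'a set \<Rightarrow> ('a \<times> 'a) set \<Rightarrow> 'a \<Rightarrow> 'a set \<Rightarrow> 'a \<Rightarrow> bool" where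
  "separates V E v U s \<longleftrightarrow>
     (\<forall>u\<in>U. \<forall>xs. undirected_path V E xs s u \<longrightarrow> v \<in> set xs)"

end

theory Submission
  imports Defs
begin

lemma path_exists:
  assumes "(s,u) \<in> r\<^sup>*" "r \<subseteq> E \<union> E\<inverse>" "E \<subseteq> V \<times> V" "s \<in> V"
  shows "\<exists>xs. undirected_path V E xs s u \<and> (\<forall>x\<in>set xs. (x,u) \<in> r\<^sup>*)"
  using assms(1)
proof (induction rule: rtrancl_induct)
  case base
  then show ?case using assms(4) by (auto simp: undirected_path_def intro!: exI[of _ "[s]"])
next
  case (step y z)
  then obtain xs where p: "undirected_path V E xs s y" and r: "\<forall>x\<in>set xs. (x,y) \<in> r\<^sup>*" by blast
  have yz: "(y,z) \<in> E \<union> E\<inverse>" using step.hyps(2) assms(2) by blast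
  have zV: "z \<in> V" using yz assms(3) by blast
  have ne: "xs \<noteq> []" and ly: "last xs = y" using p by (auto simp: undirected_path_def)
  have "undirected_path V E (xs @ [z]) s z"
    unfolding undirected_path_def
  proof (intro conjI allI impI)
    show "hd (xs @ [z]) = s" using p ne by (simp add: undirected_path_def)
    show "set (xs @ [z]) \<subseteq> V" using p zV by (auto simp: undirected_path_def)
    fix i assume i: "Suc i < length (xs @ [z])"
    show "((xs @ [z]) ! i, (xs @ [z]) ! Suc i) \<in> E \<union> E\<inverse>"
    proof (cases "Suc i < length xs")
      case True
      then show ?thesis using p by (simp add: undirected_path_def nth_append)
    next
      case False
      then have "i = length xs - 1" "Suc i = length xs" using i by auto
      then have "(xs @ [z]) ! i = y" "(xs @ [z]) ! Suc i = z"
        using ne ly by (auto simp: nth_append last_conv_nth)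
      then show ?thesis using yz by simp
    qed
  qed simp_all
  moreover have "\<forall>x\<in>set (xs @ [z]). (x,z) \<in> r\<^sup>*"
    using r step.hyps(2) by (auto intro: rtrancl_into_rtrancl)
  ultimately show ?case by blast
qed

theorem lemma39:
  fixes V :: "'a set" and E EX_ord :: "('a \<times> 'a) set" and s v :: 'a and U :: "'a set"
  assumes "E \<subseteq> V \<times> V"
    and "extraction_order V E EX_ord s"
    and "v \<in> V" and "U \<subseteq> V"
    and "separates V E v U s"
  shows "\<forall>u\<in>U. ((v, u) \<in> E \<or> (u, v) \<in> E) \<longrightarrow> (v, u) \<in> EX_ord"
proof (intro ballI impI)
  fix u assume uU: "u \<in> U" and e: "(v, u) \<in> E \<or> (u, v) \<in> E"
  obtain R where R: "R \<subseteq> E" "EX_ord = (E - R) \<union> R\<inverse>" and ac: "acyclic EX_ord"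
    and reach: "\<forall>x\<in>V. (s, x) \<in> EX_ord\<^sup>*" and sV: "s \<in> V"
    using assms(2) unfolding extraction_order_def by blast
  have sub: "EX_ord \<subseteq> E \<union> E\<inverse>" using R by blast
  have either: "(v,u) \<in> EX_ord \<or> (u,v) \<in> EX_ord" using e R by blast
  show "(v, u) \<in> EX_ord"
  proof (rule ccontr)
    assume nv: "(v, u) \<notin> EX_ord"
    with either have uv: "(u,v) \<in> EX_ord" by blast
    have "(s,u) \<in> EX_ord\<^sup>*" using reach uU assms(4) by blast
    then obtain xs where "undirected_path V E xs s u" "\<forall>x\<in>set xs. (x,u) \<in> EX_ord\<^sup>*"
      using path_exists[OF _ sub assms(1) sV] by blast
    moreover have "v \<in> set xs" using assms(5) uU calculation(1) unfolding separates_def by blast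
    ultimately have "(v,u) \<in> EX_ord\<^sup>*" by blast
    with uv have "(v,v) \<in> EX_ord\<^sup>+" by (meson rtrancl_into_trancl1)
    with ac show False unfolding acyclic_def by blast
  qed
qed

end
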